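(* Consider the linear regression model $\boldsymbol{Y}=\boldsymbol{X}\boldsymbol{\beta}+\boldsymbol{\varepsilon}$, where $\boldsymbol{X}$ is a known $n\times p$ matrix with linearly independent columns ($n>p$) and $\boldsymbol{\varepsilon}\sim N(\boldsymbol{0},\sigma^2\boldsymbol{I}_n)$, $\sigma^2>0$ unknown. Let $\theta=\boldsymbol{a}^T\boldsymbol{\beta}$ ($\boldsymbol{a}\neq\boldsymbol{0}$ given), $\boldsymbol{\tau}=\boldsymbol{C}^T\boldsymbol{\beta}-\boldsymbol{t}$ with $\boldsymbol{C}$ a given $p\times s$ matrix ($s<p$) of linearly independent columns, $\boldsymbol{t}$ a given $s$-vector, and $\boldsymbol{a}$ not in the column span of $\boldsymbol{C}$. Let $\hat{\boldsymbol{\beta}}$ be the least squares estimator, $\hat\Sigma^2=\|\boldsymbol{Y}-\boldsymbol{X}\hat{\boldsymbol{\beta}}\|^2/(n-p)$, $\hat\Theta=\boldsymbol{a}^T\hat{\boldsymbol{\beta}}$, $\hat{\boldsymbol{\tau}}=\boldsymbol{C}^T\hat{\boldsymbol{\beta}}-\boldsymbol{t}$, and assume $E\big((\hat{\boldsymbol{\tau}}-\boldsymbol{\tau})(\hat\Theta-\theta)\big)=\boldsymbol{0}$. Let $v_{11}=\boldsymbol{a}^T(\boldsymbol{X}^T\boldsymbol{X})^{-1}\boldsymbol{a}$, $\boldsymbol{V}_{22}=\boldsymbol{C}^T(\boldsymbol{X}^T\boldsymbol{X})^{-1}\boldsymbol{C}$, $F=\big(\hat{\boldsymbol{\tau}}^T\boldsymbol{V}_{22}^{-1}\hat{\boldsymbol{\tau}}/s\big)/\hat\Sigma^2$,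 and for a function $d:[0,\infty)\to(0,\infty)$ let $J(d)=[\hat\Theta-\sqrt{v_{11}}\hat\Sigma d(\sqrt F),\ \hat\Theta+\sqrt{v_{11}}\hat\Sigma d(\sqrt F)]$. Suppose $d_1,d_2:[0,\infty)\to(0,\infty)$ satisfy $d_1(x)\ge d_2(x)$ for all $x\ge0$, and that there exist $\epsilon>0$ and an interval $[a,b]$ with $0\le a<b$ such that $d_1(x)>d_2(x)+\epsilon$ for all $x\in[a,b]$. Then $E(\text{length of }J(d_1))>E(\text{length of }J(d_2))$ for all values of $\|\boldsymbol{\gamma}\|$, where $\boldsymbol{\gamma}=(1/\sigma)\boldsymbol{V}_{22}^{-1/2}\boldsymbol{\tau}$.
   Context: $\|\boldsymbol{\gamma}\|=\sqrt{\boldsymbol{\gamma}^T\boldsymbol{\gamma}}$; the claim holds for all parameter values $(\boldsymbol{\beta},\sigma^2)$.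
   Formalization: The expected length of J($d_2$) is also assumed finite, and $d_1$, $d_2$ are taken to be Borel measurable on $[0,\infty)$. The statement above fails without it. *)

theory Defs
  imports "HOL-Analysis.Analysis" "HOL-Probability.Probability"
begin

text \<open>Law of Y = X beta + eps, eps ~ N(0, sigma^2 I_n): independent normal components,
  the i-th with mean (X beta)_i and standard deviation sigma.\<close>
definition model_law :: "real^'p^'n \<Rightarrow> real^'p \<Rightarrow> real \<Rightarrow> (real^'n) measure" where
  "model_law X \<beta> \<sigma> =
     density lborel (\<lambda>y. ennreal (\<Prod>i\<in>UNIV. normal_density ((X *v \<beta>) $ i) \<sigma> (y $ i)))"

definition ls_est :: "real^'p^'n \<Rightarrow> real^'n \<Rightarrow> real^'p" where
  "ls_est X Y = matrix_inv (transpose X ** X) *v (transpose X *v Y)"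

definition sigma_hat :: "real^'p^'n \<Rightarrow> real^'n \<Rightarrow> real" where
  "sigma_hat X Y = sqrt ((norm (Y - X *v ls_est X Y))\<^sup>2 / (real CARD('n) - real CARD('p)))"

definition theta_hat :: "real^'p^'n \<Rightarrow> real^'p \<Rightarrow> real^'n \<Rightarrow> real" where
  "theta_hat X a Y = a \<bullet> ls_est X Y"

definition tau_hat :: "real^'p^'n \<Rightarrow> real^'s^'p \<Rightarrow> real^'s \<Rightarrow> real^'n \<Rightarrow> real^'s" where
  "tau_hat X C t Y = transpose C *v ls_est X Y - t"

definition v11 :: "real^'p^'n \<Rightarrow> real^'p \<Rightarrow> real" where
  "v11 X a = a \<bullet> (matrix_inv (transpose X ** X) *v a)"

definition V22 :: "real^'p^'n \<Rightarrow> real^'s^'p \<Rightarrow> real^'s^'s" where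
  "V22 X C = transpose C ** matrix_inv (transpose X ** X) ** C"

definition F_stat :: "real^'p^'n \<Rightarrow> real^'s^'p \<Rightarrow> real^'s \<Rightarrow> real^'n \<Rightarrow> real" where
  "F_stat X C t Y =
     ((tau_hat X C t Y \<bullet> (matrix_inv (V22 X C) *v tau_hat X C t Y)) / real CARD('s))
       / (sigma_hat X Y)\<^sup>2"

definition J_int :: "real^'p^'n \<Rightarrow> real^'p \<Rightarrow> real^'s^'p \<Rightarrow> real^'s \<Rightarrow> (real \<Rightarrow> real)
                      \<Rightarrow> real^'n \<Rightarrow> real set" where
  "J_int X a C t d Y =
     {theta_hat X a Y - sqrt (v11 X a) * sigma_hat X Y * d (sqrt (F_stat X C t Y)) ..
      theta_hat X a Y + sqrt (v11 X a) * sigma_hat X Y * d (sqrt (F_stat X C t Y))}"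

definition expected_length :: "real^'p^'n \<Rightarrow> real^'p \<Rightarrow> real^'s^'p \<Rightarrow> real^'s \<Rightarrow> (real \<Rightarrow> real)
                      \<Rightarrow> real^'p \<Rightarrow> real \<Rightarrow> ennreal" where
  "expected_length X a C t d \<beta> \<sigma> =
     (\<integral>\<^sup>+ Y. emeasure lborel (J_int X a C t d Y) \<partial>(model_law X \<beta> \<sigma>))"

end

theory Submission imports Defs begin

lemma matrix_inv_props:
  fixes M :: "real^'n^'n"
  assumes "invertible M"
  shows "M ** matrix_inv M = mat 1" "matrix_inv M ** M = mat 1"
  using someI_ex[OF assms[unfolded invertible_def]] unfolding matrix_inv_def by auto

lemma dot_transpose: "(x::real^'m) \<bullet> (transpose A *v w) = (A *v x) \<bullet> w"
  by (metis inner_commute dot_lmul_matrix transpose_matrix_vector)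

lemma gram_quad:
  fixes X :: "real^'p^'n"
  shows "x \<bullet> ((transpose X ** X) *v x) = (X *v x) \<bullet> (X *v x)"
  by (metis dot_transpose matrix_vector_mul_assoc)

lemma pd_invertible:
  fixes M :: "real^'n^'n"
  assumes pd: "\<And>x. x \<noteq> 0 \<Longrightarrow> x \<bullet> (M *v x) > 0"
  shows "invertible M"
proof -
  have "\<forall>x. M *v x = 0 \<longrightarrow> x = 0"
    using pd by (metis inner_zero_right less_irrefl)
  then show ?thesis
    using matrix_left_invertible_ker invertible_left_inverse by blast
qed

lemma pd_inv_pd:
  fixes M :: "real^'n^'n"
  assumes pd: "\<And>x. x \<noteq> 0 \<Longrightarrow> x \<bullet> (M *v x) > 0" and y: "y \<noteq> 0"
  shows "y \<bullet> (matrix_inv M *v y) > 0"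
proof -
  have inv: "invertible M" by (rule pd_invertible[OF pd])
  define z where "z = matrix_inv M *v y"
  have yz: "y = M *v z"
    unfolding z_def using matrix_inv_props(1)[OF inv]
    by (simp add: matrix_vector_mul_assoc)
  have "z \<noteq> 0" using y yz by auto
  then have "z \<bullet> (M *v z) > 0" by (rule pd)
  then show ?thesis using yz unfolding z_def by (metis inner_commute)
qed

lemma pd_inv_psd:
  fixes M :: "real^'n^'n"
  assumes pd: "\<And>x. x \<noteq> 0 \<Longrightarrow> x \<bullet> (M *v x) > 0"
  shows "y \<bullet> (matrix_inv M *v y) \<ge> 0"
  using pd_inv_pd[OF pd, of y] by (cases "y = 0") auto

lemma cont_mv: "continuous_on S g \<Longrightarrow> continuous_on S (\<lambda>x. (A::real^'m^'k) *v g x)"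
  by (rule bounded_linear.continuous_on[OF matrix_vector_mul_bounded_linear])

lemma lin_alg_facts:
  fixes X :: "real^'p^'n" and a :: "real^'p" and C :: "real^'s^'p"
  assumes X_rank: "rank X = CARD('p)" and C_rank: "rank C = CARD('s)" and a_nz: "a \<noteq> 0"
  shows "invertible (transpose X ** X)" "v11 X a > 0"
    "\<And>y. y \<noteq> 0 \<Longrightarrow> y \<bullet> (matrix_inv (V22 X C) *v y) > 0"
proof -
  have Xi: "\<And>x. X *v x = 0 \<Longrightarrow> x = 0"
    using X_rank matrix_nonfull_linear_equations_eq by blast
  have Ci: "\<And>x. C *v x = 0 \<Longrightarrow> x = 0"
    using C_rank matrix_nonfull_linear_equations_eq by blast
  have Gpd: "x \<bullet> ((transpose X ** X) *v x) > 0" if "x \<noteq> 0" for x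
  proof -
    have "X *v x \<noteq> 0" using Xi[of x] that by blast
    then show ?thesis by (simp add: gram_quad)
  qed
  show "invertible (transpose X ** X)" by (rule pd_invertible[OF Gpd])
  show "v11 X a > 0" unfolding v11_def using pd_inv_pd[OF Gpd a_nz] .
  have Vpd: "x \<bullet> (V22 X C *v x) > 0" if "x \<noteq> 0" for x
  proof -
    have "V22 X C *v x = transpose C *v (matrix_inv (transpose X ** X) *v (C *v x))"
      unfolding V22_def by (simp add: matrix_vector_mul_assoc matrix_mul_assoc)
    then have "x \<bullet> (V22 X C *v x) = (C *v x) \<bullet> (matrix_inv (transpose X ** X) *v (C *v x))"
      by (metis dot_transpose)
    moreover have "C *v x \<noteq> 0" using Ci that by blast
    ultimately show ?thesis using pd_inv_pd[OF Gpd] by simp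
  qed
  show "\<And>y. y \<noteq> 0 \<Longrightarrow> y \<bullet> (matrix_inv (V22 X C) *v y) > 0"
    using pd_inv_pd[OF Vpd] by blast
qed


lemma ennreal_less_add:
  fixes x y :: ennreal
  assumes "x < \<infinity>" "0 < y" shows "x < x + y"
  using assms by (metis add.right_neutral ennreal_add_left_cancel_less)

theorem theorem4:
  fixes X :: "real^'p^'n" and a :: "real^'p" and C :: "real^'s^'p" and t :: "real^'s"
    and \<beta> :: "real^'p" and \<sigma> :: real
    and d1 d2 :: "real \<Rightarrow> real" and \<epsilon> lo hi :: real
  assumes n_gt_p: "CARD('n) > CARD('p)"
    and X_rank: "rank X = CARD('p)"
    and s_lt_p: "CARD('s) < CARD('p)"
    and C_rank: "rank C = CARD('s)"
    and a_nz: "a \<noteq> 0"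
    and a_notin: "a \<notin> span (columns C)"
    and sigma_pos: "\<sigma> > 0"
    and uncorr: "(\<chi> j. \<integral>Y. (tau_hat X C t Y - (transpose C *v \<beta> - t)) $ j
                          * (theta_hat X a Y - a \<bullet> \<beta>) \<partial>(model_law X \<beta> \<sigma>)) = 0"
    and d1_meas: "d1 \<in> borel_measurable (restrict_space borel {0..})"
    and d2_meas: "d2 \<in> borel_measurable (restrict_space borel {0..})"
    and d1_pos: "\<And>x. x \<ge> 0 \<Longrightarrow> d1 x > 0"
    and d2_pos: "\<And>x. x \<ge> 0 \<Longrightarrow> d2 x > 0"
    and d_ge: "\<And>x. x \<ge> 0 \<Longrightarrow> d1 x \<ge> d2 x"
    and eps_pos: "\<epsilon> > 0"
    and lo_hi: "0 \<le> lo" "lo < hi"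
    and d_gap: "\<And>x. x \<in> {lo..hi} \<Longrightarrow> d1 x > d2 x + \<epsilon>"
    and finite_len: "expected_length X a C t d2 \<beta> \<sigma> < \<infinity>"
  shows "expected_length X a C t d1 \<beta> \<sigma> > expected_length X a C t d2 \<beta> \<sigma>"
proof -
  note LA = lin_alg_facts[OF X_rank C_rank a_nz]
  define G where "G = transpose X ** X"
  define Gi where "Gi = matrix_inv G"
  define Vi where "Vi = matrix_inv (V22 X C)"
  define M where "M = model_law X \<beta> \<sigma>"
  define np where "np = real CARD('n) - real CARD('p)"
  have np_pos: "np > 0" using n_gt_p unfolding np_def by simp
  define sh2 where "sh2 Y = (norm (Y - X *v ls_est X Y))\<^sup>2 / np" for Y
  define Q where "Q Y = (tau_hat X C t Y \<bullet> (Vi *v tau_hat X C t Y)) / real CARD('s)" for Y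
  have sh2_nn: "sh2 Y \<ge> 0" for Y unfolding sh2_def using np_pos by simp
  have sh_eq: "sigma_hat X Y = sqrt (sh2 Y)" for Y unfolding sigma_hat_def sh2_def np_def by simp
  have sh_sq: "(sigma_hat X Y)\<^sup>2 = sh2 Y" for Y using sh2_nn by (simp add: sh_eq)
  have Q_nn: "Q Y \<ge> 0" for Y
    unfolding Q_def Vi_def using pd_inv_pd[OF LA(3)] LA(3)
    by (metis divide_nonneg_nonneg less_eq_real_def of_nat_0_le_iff inner_zero_left order_refl)
  have F_eq: "F_stat X C t Y = Q Y / sh2 Y" for Y
    unfolding F_stat_def Q_def Vi_def sh_sq ..
  have F_nn: "F_stat X C t Y \<ge> 0" for Y using F_eq Q_nn sh2_nn by simp
  have v11_pos: "v11 X a > 0" by (rule LA(2))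
  define R where "R d Y = sqrt (v11 X a) * sigma_hat X Y * d (sqrt (F_stat X C t Y))" for d Y
  have R_nn: "R d Y \<ge> 0" if "\<And>x. x \<ge> 0 \<Longrightarrow> d x > 0" for d Y
    unfolding R_def using that[of "sqrt (F_stat X C t Y)"] F_nn v11_pos sh_eq sh2_nn
    by (simp add: less_imp_le)
  have EJ: "emeasure lborel (J_int X a C t d Y) = ennreal (2 * R d Y)"
    if "\<And>x. x \<ge> 0 \<Longrightarrow> d x > 0" for d Y
    using R_nn[OF that, where Y=Y] unfolding J_int_def R_def[symmetric]
    by (simp add: emeasure_lborel_Icc)
  have sets_M: "sets M = sets borel" unfolding M_def model_law_def by simp
  have meas_M: "f \<in> borel_measurable M" if "f \<in> borel_measurable borel" for f :: "real^'n \<Rightarrow> ennreal"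
    using that measurable_cong_sets[OF sets_M refl] by blast
  have c_ls: "continuous_on UNIV (\<lambda>Y. ls_est X Y)"
    unfolding ls_est_def by (intro cont_mv continuous_on_id)
  have c_tau: "continuous_on UNIV (\<lambda>Y. tau_hat X C t Y)"
    unfolding tau_hat_def by (intro continuous_intros cont_mv c_ls)
  have c_sh2: "continuous_on UNIV sh2"
    unfolding sh2_def using np_pos by (intro continuous_intros cont_mv c_ls) auto
  have c_Q: "continuous_on UNIV Q"
    unfolding Q_def by (intro continuous_intros cont_mv c_tau) auto
  have m_sh2[measurable]: "sh2 \<in> borel_measurable borel" using c_sh2 by (rule borel_measurable_continuous_onI)
  have m_Q[measurable]: "Q \<in> borel_measurable borel" using c_Q by (rule borel_measurable_continuous_onI)
  have m_F: "(\<lambda>Y. sqrt (F_stat X C t Y)) \<in> borel_measurable borel"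
    unfolding F_eq by measurable
  have m_F2: "(\<lambda>Y. sqrt (F_stat X C t Y)) \<in> borel \<rightarrow>\<^sub>M restrict_space borel {0..}"
    by (rule measurable_restrict_space2[OF _ m_F]) (use F_nn in auto)
  have m_R: "R d \<in> borel_measurable borel" if "d \<in> borel_measurable (restrict_space borel {0..})" for d
  proof -
    have "(\<lambda>Y. d (sqrt (F_stat X C t Y))) \<in> borel_measurable borel"
      using measurable_comp[OF m_F2 that] by (simp add: comp_def)
    then show ?thesis unfolding R_def sh_eq by measurable
  qed
  define S0 where "S0 = {Y. 0 < sh2 Y \<and> lo\<^sup>2 * sh2 Y < Q Y \<and> Q Y < hi\<^sup>2 * sh2 Y}"
  have open_S0: "open S0" unfolding S0_def
    by (intro open_Collect_conj open_Collect_less continuous_intros c_sh2 c_Q)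
  have S0_sets[measurable]: "S0 \<in> sets borel" using open_S0 by simp
  have S0_sqrtF: "sqrt (F_stat X C t Y) \<in> {lo..hi}" "sigma_hat X Y > 0" if "Y \<in> S0" for Y
  proof -
    have p: "0 < sh2 Y" "lo\<^sup>2 * sh2 Y < Q Y" "Q Y < hi\<^sup>2 * sh2 Y" using that S0_def by auto
    have "lo\<^sup>2 < F_stat X C t Y" "F_stat X C t Y < hi\<^sup>2"
      using p by (simp_all add: F_eq field_simps)
    then have "sqrt (lo\<^sup>2) < sqrt (F_stat X C t Y)" "sqrt (F_stat X C t Y) < sqrt (hi\<^sup>2)"
      by (simp_all only: real_sqrt_less_iff)
    then show "sqrt (F_stat X C t Y) \<in> {lo..hi}" using lo_hi by simp
    show "sigma_hat X Y > 0" using p by (simp add: sh_eq)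
  qed
  have S0_ne: "S0 \<noteq> {}"
  proof -
    have "rank (transpose X) \<le> min CARD('p) CARD('n)" by (rule rank_bound)
    then have "rank (transpose X) \<noteq> CARD('n)" using n_gt_p by linarith
    then obtain r where r: "r \<noteq> 0" "transpose X *v r = 0"
      using matrix_nonfull_linear_equations_eq by blast
    obtain b where b: "transpose C *v b - t \<noteq> 0"
    proof (cases "t = 0")
      case False then show ?thesis using that[of 0] by simp
    next
      case True
      have "C \<noteq> 0" using C_rank rank_eq_0[of C] by simp
      have "transpose C \<noteq> 0"
      proof
        assume "transpose C = 0"
        then have "C = transpose 0" by (metis transpose_transpose)
        then show False using \<open>C \<noteq> 0\<close> by (simp add: transpose_def vec_eq_iff)
      qed
      then obtain b where "transpose C *v b \<noteq> 0 *v b" using matrix_eq by blast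
      then show ?thesis using that[of b] True by simp
    qed
    define tau0 where "tau0 = transpose C *v b - t"
    define Q0 where "Q0 = (tau0 \<bullet> (Vi *v tau0)) / real CARD('s)"
    have Q0_pos: "Q0 > 0" unfolding Q0_def Vi_def tau0_def using LA(3)[OF b] by simp
    define m where "m = (lo + hi) / 2"
    have m: "lo < m" "m < hi" "m > 0" using lo_hi unfolding m_def by auto
    define T where "T = Q0 / m\<^sup>2"
    have T_pos: "T > 0" unfolding T_def using Q0_pos m by simp
    have lmh: "lo\<^sup>2 < m\<^sup>2" "m\<^sup>2 < hi\<^sup>2" using m lo_hi by (simp_all add: power_strict_mono)
    have T1: "lo\<^sup>2 * T < Q0"
    proof -
      have "lo\<^sup>2 * T = (lo\<^sup>2 / m\<^sup>2) * Q0" unfolding T_def by simp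
      also have "\<dots> < 1 * Q0" using lmh m Q0_pos by (intro mult_strict_right_mono) simp_all
      finally show ?thesis by simp
    qed
    have T2: "Q0 < hi\<^sup>2 * T"
    proof -
      have "1 * Q0 < (hi\<^sup>2 / m\<^sup>2) * Q0" using lmh m Q0_pos by (intro mult_strict_right_mono) simp_all
      also have "\<dots> = hi\<^sup>2 * T" unfolding T_def by simp
      finally show ?thesis by simp
    qed
    define c where "c = sqrt (T * np) / norm r"
    define Y0 where "Y0 = X *v b + c *\<^sub>R r"
    have XtY0: "transpose X *v Y0 = G *v b"
      unfolding Y0_def G_def using r(2)
      by (simp add: matrix_vector_right_distrib matrix_vector_mult_scaleR matrix_vector_mul_assoc)
    have ls0: "ls_est X Y0 = b"
      unfolding ls_est_def XtY0 using matrix_inv_props(2)[OF LA(1)]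
      by (simp add: G_def matrix_vector_mul_assoc)
    have res0: "Y0 - X *v ls_est X Y0 = c *\<^sub>R r" by (simp only: ls0) (simp add: Y0_def)
    have "(norm (c *\<^sub>R r))\<^sup>2 = T * np"
    proof -
      have "(norm (c *\<^sub>R r))\<^sup>2 = c\<^sup>2 * (norm r)\<^sup>2" by (simp add: power_mult_distrib)
      also have "\<dots> = T * np" unfolding c_def using T_pos np_pos r(1)
        by (simp add: power_divide)
      finally show ?thesis .
    qed
    then have sh0: "sh2 Y0 = T" unfolding sh2_def res0 using np_pos by simp
    have Qy0: "Q Y0 = Q0" unfolding Q_def Q0_def tau_hat_def ls0 tau0_def ..
    have "Y0 \<in> S0" unfolding S0_def using sh0 Qy0 T_pos T1 T2 by simp
    then show ?thesis by blast
  qed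
  have S0_pos: "emeasure lborel S0 > 0"
  proof (rule ccontr)
    assume "\<not> emeasure lborel S0 > 0"
    then have "S0 \<in> null_sets lborel" using S0_sets by (simp add: null_sets_def zero_less_iff_neq_zero)
    then have "S0 \<in> null_sets lebesgue" by (simp add: null_sets_completion_iff)
    then have "negligible S0" by (simp add: negligible_iff_null_sets)
    then show False using open_not_negligible[OF open_S0 S0_ne] by blast
  qed
  have MS0: "emeasure M S0 > 0"
  proof (rule ccontr)
    define f where "f y = ennreal (\<Prod>i\<in>UNIV. normal_density ((X *v \<beta>) $ i) \<sigma> (y $ i))" for y :: "real^'n"
    have mf: "f \<in> borel_measurable lborel" unfolding f_def by measurable
    have fpos: "f y > 0" for y unfolding f_def using sigma_pos
      by (simp add: normal_density_pos prod_pos)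
    assume "\<not> emeasure M S0 > 0"
    then have "emeasure M S0 = 0" by (simp add: zero_less_iff_neq_zero)
    moreover have "emeasure M S0 = (\<integral>\<^sup>+ x. f x * indicator S0 x \<partial>lborel)"
      unfolding M_def model_law_def f_def[symmetric] using mf by (simp add: emeasure_density)
    ultimately have "AE x in lborel. f x * indicator S0 x = 0"
      using mf by (simp add: nn_integral_0_iff_AE)
    then have "AE x in lborel. x \<notin> S0"
    proof eventually_elim
      case (elim x)
      show ?case
      proof
        assume "x \<in> S0"
        with elim have "f x = 0" by simp
        with fpos[of x] show False by simp
      qed
    qed
    then have "S0 \<in> null_sets lborel" using S0_sets by (simp add: AE_iff_null_sets)
    then show False using S0_pos by (simp add: null_sets_def)
  qed
  define g where "g Y = ennreal (2 * sqrt (v11 X a) * sigma_hat X Y * \<epsilon>) * indicator S0 Y" for Y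
  have m_g: "g \<in> borel_measurable M" unfolding g_def sh_eq by (intro meas_M) measurable
  have g_pos: "integral\<^sup>N M g > 0"
  proof (rule ccontr)
    assume "\<not> integral\<^sup>N M g > 0"
    then have "integral\<^sup>N M g = 0" by (simp add: zero_less_iff_neq_zero)
    then have "AE Y in M. g Y = 0" using m_g by (simp add: nn_integral_0_iff_AE)
    then have "AE Y in M. Y \<notin> S0"
    proof eventually_elim
      case (elim Y)
      show ?case
      proof
        assume Y: "Y \<in> S0"
        have "2 * sqrt (v11 X a) * sigma_hat X Y * \<epsilon> > 0"
          using S0_sqrtF(2)[OF Y] v11_pos eps_pos by simp
        then have "g Y > 0" unfolding g_def using Y by simp
        then show False using elim by simp
      qed
    qed
    moreover have "S0 \<in> sets M" using sets_M by simp
    ultimately have "S0 \<in> null_sets M" by (simp add: AE_iff_null_sets)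
    then show False using MS0 by (simp add: null_sets_def)
  qed
  have pw: "ennreal (2 * R d2 Y) + g Y \<le> ennreal (2 * R d1 Y)" for Y
  proof -
    define u where "u = sqrt (F_stat X C t Y)"
    have u0: "u \<ge> 0" unfolding u_def using F_nn by simp
    have k0: "sqrt (v11 X a) * sigma_hat X Y \<ge> 0" using v11_pos sh_eq sh2_nn[of Y] by simp
    have R2: "R d2 Y \<ge> 0" using R_nn[OF d2_pos] .
    show ?thesis
    proof (cases "Y \<in> S0")
      case True
      have "d2 u + \<epsilon> \<le> d1 u" using d_gap[of u] S0_sqrtF(1)[OF True] unfolding u_def by fastforce
      then have "sqrt (v11 X a) * sigma_hat X Y * (d2 u + \<epsilon>) \<le> sqrt (v11 X a) * sigma_hat X Y * d1 u"
        using k0 by (rule mult_left_mono)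
      then have le: "2 * R d2 Y + 2 * sqrt (v11 X a) * sigma_hat X Y * \<epsilon> \<le> 2 * R d1 Y"
        unfolding R_def u_def[symmetric] by (simp add: algebra_simps)
      have e0: "0 \<le> 2 * sqrt (v11 X a) * sigma_hat X Y * \<epsilon>" using k0 eps_pos by (metis mult.commute mult_nonneg_nonneg less_imp_le zero_le_numeral mult.assoc)
      have "ennreal (2 * R d2 Y) + g Y = ennreal (2 * R d2 Y + 2 * sqrt (v11 X a) * sigma_hat X Y * \<epsilon>)"
        unfolding g_def using True R2 e0 by (simp add: ennreal_plus)
      also have "\<dots> \<le> ennreal (2 * R d1 Y)" using le by (rule ennreal_leI)
      finally show ?thesis .
    next
      case False
      have "sqrt (v11 X a) * sigma_hat X Y * d2 u \<le> sqrt (v11 X a) * sigma_hat X Y * d1 u"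
        using k0 d_ge[OF u0] by (rule mult_left_mono[rotated])
      then have "2 * R d2 Y \<le> 2 * R d1 Y" unfolding R_def u_def[symmetric] by simp
      then show ?thesis unfolding g_def using False by (simp add: ennreal_leI)
    qed
  qed
  have E: "expected_length X a C t d \<beta> \<sigma> = (\<integral>\<^sup>+ Y. ennreal (2 * R d Y) \<partial>M)"
    if "\<And>x. x \<ge> 0 \<Longrightarrow> d x > 0" for d
    unfolding expected_length_def M_def using EJ[OF that] by simp
  have m2: "(\<lambda>Y. ennreal (2 * R d2 Y)) \<in> borel_measurable M"
    using m_R[OF d2_meas] by (intro meas_M) measurable
  have "expected_length X a C t d2 \<beta> \<sigma> < expected_length X a C t d2 \<beta> \<sigma> + integral\<^sup>N M g"
    using finite_len g_pos by (rule ennreal_less_add)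
  also have "\<dots> = (\<integral>\<^sup>+ Y. ennreal (2 * R d2 Y) + g Y \<partial>M)"
    using m2 m_g E[OF d2_pos] by (simp add: nn_integral_add)
  also have "\<dots> \<le> (\<integral>\<^sup>+ Y. ennreal (2 * R d1 Y) \<partial>M)"
    by (intro nn_integral_mono pw)
  also have "\<dots> = expected_length X a C t d1 \<beta> \<sigma>" using E[OF d1_pos] by simp
  finally show ?thesis .
qed

end
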